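(* Let $f:\mathbb{N}\to[0,\infty)$ be weakly super-multiplicative with normal order $g:(0,\infty)\to(0,\infty)$, where $g$ is either non-decreasing or $\log$-uniformly continuous. Then the limit $\lim_{y\to\infty}\frac{\log g(y)}{\log y}$ (over real $y$) exists in $\mathbb{R}\cup\{\infty\}$ and equals $\sup_{n\ge2}\frac{\log f(n)}{\log n}$ (with the convention $\log 0=-\infty$).
   Context: A function $f:\mathbb{N}\to[0,\infty)$ is weakly super-multiplicative if for all $n\in\mathbb{N}$ and all $\epsilon>0$ there exist $x_0>0$ and $\delta>0$ such that for all real $x>x_0$, $\#\{m\in\mathbb{N}\cap[x,(1+\epsilon)x]: f(nm)\ge(1-\epsilon)f(n)f(m)\}\ge\delta x$. A function $f:\mathbb{N}\to[0,\infty)$ has normal order $g$ if for every $\epsilon>0$ the set $\{n\in\mathbb{N}: |f(n)-g(n)|\ge\epsilon g(n)\}$ has upper (natural) density $0$. A function $g:(0,\infty)\to(0,\infty)$ is $\log$-uniformly continuous if for every $\epsilon>0$ there is $\delta>0$ such that for all $x,y>0$ with $|x/y-1|<\delta$ we have $|g(x)/g(y)-1|<\epsilon$. *)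

theory Defs
  imports "HOL-Analysis.Analysis" "HOL-Library.Liminf_Limsup"
begin

text \<open>Natural numbers are the positive integers here.\<close>

definition weakly_super_multiplicative :: "(nat \<Rightarrow> real) \<Rightarrow> bool" where
  "weakly_super_multiplicative f \<longleftrightarrow>
     (\<forall>n\<ge>1. \<forall>\<epsilon>>0. \<exists>x0>0. \<exists>\<delta>>0. \<forall>x::real. x > x0 \<longrightarrow>
        real (card {m::nat. m \<ge> 1 \<and> x \<le> real m \<and> real m \<le> (1 + \<epsilon>) * x \<and>
                            f (n * m) \<ge> (1 - \<epsilon>) * f n * f m}) \<ge> \<delta> * x)"

definition upper_density :: "nat set \<Rightarrow> ereal" where
  "upper_density S = limsup (\<lambda>N. ereal (real (card (S \<inter> {1..N})) / real N))"

definition has_normal_order :: "(nat \<Rightarrow> real) \<Rightarrow> (real \<Rightarrow> real) \<Rightarrow> bool" where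
  "has_normal_order f g \<longleftrightarrow>
     (\<forall>\<epsilon>>0. upper_density {n. n \<ge> 1 \<and> \<bar>f n - g (real n)\<bar> \<ge> \<epsilon> * g (real n)} = 0)"

definition log_uniformly_continuous :: "(real \<Rightarrow> real) \<Rightarrow> bool" where
  "log_uniformly_continuous g \<longleftrightarrow>
     (\<forall>\<epsilon>>0. \<exists>\<delta>>0. \<forall>x y. x > 0 \<longrightarrow> y > 0 \<longrightarrow> \<bar>x / y - 1\<bar> < \<delta> \<longrightarrow>
        \<bar>g x / g y - 1\<bar> < \<epsilon>)"

definition log_ratio :: "(nat \<Rightarrow> real) \<Rightarrow> nat \<Rightarrow> ereal" where
  "log_ratio f n = (if f n = 0 then -\<infinity> else ereal (ln (f n) / ln (real n)))"

end

theory Submission imports Defs begin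

lemma density_small:
  assumes normal: "has_normal_order f g" and e: "\<epsilon> > 0" and th: "\<theta> > 0"
  shows "\<exists>N0. \<forall>N\<ge>N0. real (card ({n. n \<ge> 1 \<and> \<bar>f n - g (real n)\<bar> \<ge> \<epsilon> * g (real n)} \<inter> {1..N})) \<le> \<theta> * real N"
proof -
  let ?B = "{n. n \<ge> 1 \<and> \<bar>f n - g (real n)\<bar> \<ge> \<epsilon> * g (real n)}"
  have "upper_density ?B = 0" using normal e unfolding has_normal_order_def by blast
  hence "limsup (\<lambda>N. ereal (real (card (?B \<inter> {1..N})) / real N)) < ereal \<theta>"
    using th unfolding upper_density_def by simp
  from Limsup_lessD[OF this] have "eventually (\<lambda>N. ereal (real (card (?B \<inter> {1..N})) / real N) < ereal \<theta>) sequentially" .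
  then obtain N1 where N1: "\<And>N. N \<ge> N1 \<Longrightarrow> ereal (real (card (?B \<inter> {1..N})) / real N) < ereal \<theta>"
    by (auto simp: eventually_sequentially)
  show ?thesis
  proof (intro exI allI impI)
    fix N assume "N \<ge> max N1 1"
    hence "real (card (?B \<inter> {1..N})) / real N < \<theta>" "N \<ge> 1" using N1 by auto
    thus "real (card (?B \<inter> {1..N})) \<le> \<theta> * real N" by (simp add: divide_simps)
  qed
qed

lemma key:
  fixes f :: "nat \<Rightarrow> real" and g :: "real \<Rightarrow> real"
  assumes wsm: "weakly_super_multiplicative f" and normal: "has_normal_order f g"
    and n: "n \<ge> 1" and e: "\<epsilon> > 0"
  shows "\<exists>X. \<forall>x>X. \<exists>m. m \<ge> 1 \<and> x \<le> real m \<and> real m \<le> (1+\<epsilon>)*x \<and>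
     f (n*m) \<ge> (1-\<epsilon>) * f n * f m \<and> \<bar>f m - g (real m)\<bar> < \<epsilon> * g (real m) \<and>
     \<bar>f (n*m) - g (real (n*m))\<bar> < \<epsilon> * g (real (n*m))"
proof -
  let ?B = "{n. n \<ge> 1 \<and> \<bar>f n - g (real n)\<bar> \<ge> \<epsilon> * g (real n)}"
  obtain x0 \<delta> where x0: "x0 > 0" and d: "\<delta> > 0" and
    W: "\<And>x. x > x0 \<Longrightarrow> real (card {m::nat. m \<ge> 1 \<and> x \<le> real m \<and> real m \<le> (1 + \<epsilon>) * x \<and>
                            f (n * m) \<ge> (1 - \<epsilon>) * f n * f m}) \<ge> \<delta> * x"
    using wsm n e unfolding weakly_super_multiplicative_def by meson
  define \<theta> where "\<theta> = \<delta> / (2 * (1 + real n) * (1 + \<epsilon>))"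
  have th: "\<theta> > 0" using d e unfolding \<theta>_def by auto
  obtain N0 where N0: "\<And>N. N \<ge> N0 \<Longrightarrow> real (card (?B \<inter> {1..N})) \<le> \<theta> * real N"
    using density_small[OF normal e th] by blast
  show ?thesis
  proof (rule exI[of _ "max x0 (real N0)"], intro allI impI)
    fix x assume xX: "x > max x0 (real N0)"
    hence xpos: "x > 0" using x0 by auto
    define S where "S = {m::nat. m \<ge> 1 \<and> x \<le> real m \<and> real m \<le> (1 + \<epsilon>) * x \<and>
                            f (n * m) \<ge> (1 - \<epsilon>) * f n * f m}"
    have cS: "real (card S) \<ge> \<delta> * x" using W xX unfolding S_def by auto
    define N where "N = nat \<lfloor>(1+\<epsilon>)*x\<rfloor>"
    have t0: "(1+\<epsilon>)*x \<ge> 0" using xpos e by auto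
    have fl: "real N = real_of_int \<lfloor>(1+\<epsilon>)*x\<rfloor>" unfolding N_def using t0 by simp
    have NX: "real N \<le> (1+\<epsilon>)*x" using fl by simp
    have le: "m \<le> N" if "real m \<le> (1+\<epsilon>)*x" for m
    proof -
      have "int m \<le> \<lfloor>(1+\<epsilon>)*x\<rfloor>" using that by (simp add: le_floor_iff)
      thus ?thesis unfolding N_def by simp
    qed
    have "real N0 \<le> (1+\<epsilon>)*x" using xX e xpos by (smt (verit) mult_le_cancel_right1)
    hence NN0: "N \<ge> N0" using le by blast
    have SN: "S \<subseteq> {1..N}" unfolding S_def using le by auto
    show "\<exists>m. m \<ge> 1 \<and> x \<le> real m \<and> real m \<le> (1+\<epsilon>)*x \<and>
     f (n*m) \<ge> (1-\<epsilon>) * f n * f m \<and> \<bar>f m - g (real m)\<bar> < \<epsilon> * g (real m) \<and>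
     \<bar>f (n*m) - g (real (n*m))\<bar> < \<epsilon> * g (real (n*m))"
    proof (rule ccontr)
      assume "\<not> ?thesis"
      hence sub: "S \<subseteq> (?B \<inter> {1..N}) \<union> {m\<in>{1..N}. n*m \<in> ?B}"
        using SN n unfolding S_def by (auto simp: not_less)
      have inj: "inj_on (\<lambda>m. n*m) {m\<in>{1..N}. n*m \<in> ?B}" using n by (auto simp: inj_on_def)
      have img: "(\<lambda>m. n*m) ` {m\<in>{1..N}. n*m \<in> ?B} \<subseteq> ?B \<inter> {1..n*N}" by auto
      have c2: "card {m\<in>{1..N}. n*m \<in> ?B} \<le> card (?B \<inter> {1..n*N})"
        using card_inj_on_le[OF inj img] by simp
      have "card S \<le> card ((?B \<inter> {1..N}) \<union> {m\<in>{1..N}. n*m \<in> ?B})"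
        by (rule card_mono[OF _ sub]) auto
      also have "\<dots> \<le> card (?B \<inter> {1..N}) + card {m\<in>{1..N}. n*m \<in> ?B}" by (rule card_Un_le)
      finally have "real (card S) \<le> real (card (?B \<inter> {1..N})) + real (card (?B \<inter> {1..n*N}))"
        using c2 by linarith
      also have "\<dots> \<le> \<theta> * real N + \<theta> * real (n*N)"
        using N0[OF NN0] N0[of "n*N"] NN0 n
        by (smt (verit) le_trans mult_le_mono1 nat_mult_1)
      also have "\<dots> = \<theta> * (1 + real n) * real N" by (simp add: algebra_simps)
      also have "\<dots> \<le> \<theta> * (1 + real n) * ((1+\<epsilon>)*x)"
        using NX th by (intro mult_left_mono) auto
      also have "\<dots> = \<delta> * x / 2" unfolding \<theta>_def
      proof -
        have p: "2*(1+real n)*(1+\<epsilon>) > 0" using e by auto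
        show "\<delta> / (2 * (1 + real n) * (1 + \<epsilon>)) * (1 + real n) * ((1 + \<epsilon>) * x) = \<delta> * x / 2"
          using p by (simp add: field_simps)
      qed
      finally show False using cS mult_pos_pos[OF d xpos] by linarith
    qed
  qed
qed


lemma regQ:
  fixes g :: "real \<Rightarrow> real"
  assumes g_pos: "\<And>y. y > 0 \<Longrightarrow> g y > 0"
    and reg: "mono_on {0<..} g \<or> log_uniformly_continuous g" and e: "\<epsilon> > 0"
  shows "\<exists>\<eta>>0. \<forall>y z. 0 < y \<longrightarrow> y \<le> z \<longrightarrow> z \<le> (1+\<eta>)*y \<longrightarrow> g z \<ge> (1-\<epsilon>) * g y"
  using reg
proof
  assume m: "mono_on {0<..} g"
  show ?thesis
  proof (intro exI[of _ 1] conjI allI impI)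
    fix y z :: real assume "0 < y" "y \<le> z"
    hence "g y \<le> g z" using m by (auto intro: mono_onD)
    moreover have "g y > 0" using g_pos \<open>0<y\<close> by auto
    ultimately show "g z \<ge> (1-\<epsilon>) * g y" using mult_pos_pos[OF e \<open>g y > 0\<close>] by (simp add: algebra_simps)
  qed simp
next
  assume l: "log_uniformly_continuous g"
  then obtain \<delta> where d: "\<delta> > 0" and D: "\<And>x y. x > 0 \<Longrightarrow> y > 0 \<Longrightarrow> \<bar>x / y - 1\<bar> < \<delta> \<Longrightarrow>
        \<bar>g x / g y - 1\<bar> < \<epsilon>" using e unfolding log_uniformly_continuous_def by meson
  show ?thesis
  proof (intro exI[of _ "\<delta>/2"] conjI allI impI)
    fix y z :: real assume y: "0 < y" "y \<le> z" "z \<le> (1+\<delta>/2)*y"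
    have "z / y \<ge> 1" "z / y \<le> 1 + \<delta>/2" using y by (auto simp: field_simps)
    hence "\<bar>z / y - 1\<bar> < \<delta>" using d by auto
    hence "\<bar>g z / g y - 1\<bar> < \<epsilon>" using D y by auto
    moreover have "g y > 0" using g_pos y by auto
    ultimately have "g z / g y > 1 - \<epsilon>" by linarith
    thus "g z \<ge> (1-\<epsilon>) * g y" using \<open>g y > 0\<close> by (simp add: field_simps)
  qed (use d in auto)
qed

lemma chain:
  fixes g :: "real \<Rightarrow> real"
  assumes g_pos: "\<And>y. y > 0 \<Longrightarrow> g y > 0" and eta: "\<eta> > 0"
    and Q: "\<And>y z. 0 < y \<Longrightarrow> y \<le> z \<Longrightarrow> z \<le> (1+\<eta>)*y \<Longrightarrow> g z \<ge> (1/2) * g y"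
  shows "0 < y \<Longrightarrow> y \<le> z \<Longrightarrow> z \<le> (1+\<eta>)^j*y \<Longrightarrow> g z \<ge> (1/2)^j * g y"
proof (induction j arbitrary: z)
  case 0
  hence "z = y" by simp
  thus ?case by simp
next
  case (Suc j)
  define w where "w = max y (z/(1+\<eta>))"
  have pj: "(1+\<eta>)^j \<ge> 1" using eta by simp
  have w1: "0 < w" "y \<le> w" using Suc by (auto simp: w_def)
  have "z/(1+\<eta>) \<le> (1+\<eta>)^j*y" using Suc eta by (simp add: field_simps)
  moreover have "y \<le> (1+\<eta>)^j*y" using pj Suc by simp
  ultimately have w2: "w \<le> (1+\<eta>)^j*y" unfolding w_def by simp
  have w3: "w \<le> z" using Suc eta by (auto simp: w_def field_simps)
  have "z/(1+\<eta>) \<le> w" by (simp add: w_def)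
  hence "(1+\<eta>)*(z/(1+\<eta>)) \<le> (1+\<eta>)*w" using eta by (intro mult_left_mono) auto
  hence w4: "z \<le> (1+\<eta>)*w" using eta by simp
  have "g w \<ge> (1/2)^j * g y" using Suc.IH[OF Suc.prems(1) w1(2) w2] .
  moreover have "g z \<ge> (1/2) * g w" using Q[OF w1(1) w3 w4] .
  ultimately show ?case by simp
qed


lemma upper:
  fixes f :: "nat \<Rightarrow> real" and g :: "real \<Rightarrow> real"
  assumes g_pos: "\<And>y. y > 0 \<Longrightarrow> g y > 0"
    and wsm: "weakly_super_multiplicative f"
    and normal: "has_normal_order f g"
    and reg: "mono_on {0<..} g \<or> log_uniformly_continuous g"
    and fb: "\<And>n. n \<ge> 2 \<Longrightarrow> f n \<le> real n powr b" and bc: "b < c"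
  shows "eventually (\<lambda>y. ln (g y) / ln y < c) at_top"
proof -
  obtain \<eta> where eta: "\<eta> > 0" and Q: "\<And>y z. 0 < y \<Longrightarrow> y \<le> z \<Longrightarrow> z \<le> (1+\<eta>)*y \<Longrightarrow> g z \<ge> (1-1/2) * g y"
    using regQ[OF g_pos reg, of "1/2"] by auto
  define e0 where "e0 = min \<eta> (1/2)"
  have e0: "e0 > 0" "e0 \<le> \<eta>" "e0 \<le> 1/2" using eta by (auto simp: e0_def)
  obtain X where X: "\<And>x. x > X \<Longrightarrow> \<exists>m. m \<ge> 1 \<and> x \<le> real m \<and> real m \<le> (1+e0)*x \<and>
     f (1*m) \<ge> (1-e0) * f 1 * f m \<and> \<bar>f m - g (real m)\<bar> < e0 * g (real m) \<and>
     \<bar>f (1*m) - g (real (1*m))\<bar> < e0 * g (real (1*m))"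
    using key[OF wsm normal _ e0(1), of 1] by auto
  define C where "C = ln 4 + \<bar>b\<bar> * ln 2"
  have C0: "C \<ge> 0" unfolding C_def by auto
  show ?thesis unfolding eventually_at_top_linorder
  proof (rule exI[of _ "max (X+1) (max 2 (exp (C/(c-b)) + 1))"], intro allI impI)
    fix y assume yY: "y \<ge> max (X+1) (max 2 (exp (C/(c-b)) + 1))"
    hence y2: "y \<ge> 2" and yX: "y > X" and yE: "y > exp (C/(c-b))" by auto
    then obtain m where m: "m \<ge> 1" "y \<le> real m" "real m \<le> (1+e0)*y"
      "\<bar>f m - g (real m)\<bar> < e0 * g (real m)" using X by force
    have ypos: "y > 0" using y2 by auto
    have m2: "m \<ge> 2" using m y2 by linarith
    have mpos: "real m > 0" using m2 by simp
    have gm: "g (real m) > 0" using g_pos mpos by auto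
    have gy: "g y > 0" using g_pos ypos by auto
    have "(1-e0) * g (real m) < f m" using m(4) by (simp add: algebra_simps abs_less_iff)
    moreover have "(1/2) * g (real m) \<le> (1-e0) * g (real m)" using e0 gm by (intro mult_right_mono) auto
    ultimately have g1: "g (real m) < 2 * f m" by linarith
    have "m \<le> (1+\<eta>)*y"
      using m(3) e0 ypos by (smt (verit, best) mult_right_mono)
    hence g2: "g (real m) \<ge> (1/2) * g y" using Q[OF ypos m(2)] by simp
    have fm: "f m \<le> real m powr b" using fb m2 by auto
    have gyb: "g y \<le> 4 * real m powr b" using g1 g2 fm by linarith
    have "ln (g y) \<le> ln (4 * real m powr b)" using gyb gy by (meson ln_le_cancel_iff order_less_le_trans)
    also have "\<dots> = ln 4 + b * ln (real m)" using mpos by (simp add: ln_mult ln_powr)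
    finally have l1: "ln (g y) \<le> ln 4 + b * ln (real m)" .
    have lm1: "ln (real m) \<ge> ln y" using m(2) ypos by simp
    have "(1+e0)*y \<le> 2 * y" using e0 ypos by (intro mult_right_mono) auto
    hence "real m \<le> 2 * y" using m(3) by linarith
    hence "ln (real m) \<le> ln (2*y)" using mpos by simp
    hence lm2: "ln (real m) \<le> ln 2 + ln y" using ypos by (simp add: ln_mult)
    have "b * ln (real m) \<le> b * ln y + \<bar>b\<bar> * ln 2"
    proof (cases "b \<ge> 0")
      case True
      hence "b * ln (real m) \<le> b * (ln 2 + ln y)" using lm2 by (intro mult_left_mono) auto
      thus ?thesis using True by (simp add: algebra_simps)
    next
      case False
      hence "b * ln (real m) \<le> b * ln y" using lm1 by (intro mult_left_mono_neg) auto
      thus ?thesis by (smt (verit) ln_ge_zero_iff mult_nonneg_nonneg abs_ge_zero)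
    qed
    hence l2: "ln (g y) \<le> C + b * ln y" using l1 unfolding C_def by linarith
    have lypos: "ln y > 0" using y2 by simp
    have "C/(c-b) < ln y" using yE ypos by (metis exp_less_cancel_iff exp_ln)
    hence "C < (c-b) * ln y" using bc by (simp add: field_simps)
    hence "ln (g y) < c * ln y" using l2 by (simp add: algebra_simps)
    thus "ln (g y) / ln y < c" using lypos by (simp add: divide_simps)
  qed
qed


lemma lower:
  fixes f :: "nat \<Rightarrow> real" and g :: "real \<Rightarrow> real"
  assumes g_pos: "\<And>y. y > 0 \<Longrightarrow> g y > 0"
    and wsm: "weakly_super_multiplicative f"
    and normal: "has_normal_order f g"
    and reg: "mono_on {0<..} g \<or> log_uniformly_continuous g"
    and n2: "n \<ge> 2" and fn: "f n > 0" and a: "a < ln (f n) / ln (real n)"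
  shows "eventually (\<lambda>y. a < ln (g y) / ln y) at_top"
proof -
  have lnn: "ln (real n) > 0" using n2 by simp
  define r where "r = ln (f n) / ln (real n)"
  have lfn: "ln (f n) = r * ln (real n)" using lnn unfolding r_def by simp
  define \<gamma> where "\<gamma> = (r - a) * ln (real n)"
  have gam: "\<gamma> > 0" using a lnn unfolding \<gamma>_def r_def by simp
  have lim1: "((\<lambda>e. ln ((1-e)^3/(1+e)) - a * ln (1+e)) \<longlongrightarrow> ln ((1-0)^3/(1+0)) - a * ln (1+0)) (at_right (0::real))"
    by (intro tendsto_intros) auto
  have lim2: "((\<lambda>e. ln ((1-e)^3/(1+e))) \<longlongrightarrow> ln ((1-0)^3/(1+0))) (at_right (0::real))"
    by (intro tendsto_intros) auto
  have ev1: "eventually (\<lambda>e. ln ((1-e)^3/(1+e)) - a * ln (1+e) > - \<gamma>) (at_right (0::real))"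
    using order_tendstoD(1)[OF lim1, of "-\<gamma>"] gam by simp
  have ev2: "eventually (\<lambda>e. ln ((1-e)^3/(1+e)) > - \<gamma>) (at_right (0::real))"
    using order_tendstoD(1)[OF lim2, of "-\<gamma>"] gam by simp
  obtain bb where bb: "bb > 0" and BB: "\<And>e. e > 0 \<Longrightarrow> e < bb \<Longrightarrow>
      ln ((1-e)^3/(1+e)) - a * ln (1+e) > - \<gamma> \<and> ln ((1-e)^3/(1+e)) > - \<gamma>"
    using eventually_conj[OF ev1 ev2] unfolding eventually_at_right_field by auto
  define \<epsilon> where "\<epsilon> = min (bb/2) (1/2)"
  have e: "\<epsilon> > 0" "\<epsilon> < 1" "\<epsilon> \<le> 1/2" using bb by (auto simp: \<epsilon>_def)
  have h: "ln ((1-\<epsilon>)^3/(1+\<epsilon>)) - a * ln (1+\<epsilon>) > - \<gamma>" "ln ((1-\<epsilon>)^3/(1+\<epsilon>)) > - \<gamma>"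
    using BB[of \<epsilon>] e bb by (auto simp: \<epsilon>_def)
  define c where "c = (1-\<epsilon>)^3/(1+\<epsilon>)"
  have cpos: "c > 0" using e unfolding c_def by auto
  define A where "A = (1+\<epsilon>) * real n"
  define L where "L = ln A"
  have rn2: "real n \<ge> 2" using n2 by simp
  have "1 * real n \<le> (1+\<epsilon>) * real n" using e by (intro mult_right_mono) auto
  hence Apos: "A > 1" unfolding A_def using rn2 by linarith
  have L_eq: "L = ln (1+\<epsilon>) + ln (real n)" unfolding L_def A_def using e n2 by (simp add: ln_mult)
  have Lpos: "L > 0" unfolding L_def using Apos by simp
  define K where "K = ln c + ln (f n)"
  have K_eq: "K = ln (c * f n)" unfolding K_def using cpos fn by (simp add: ln_mult)
  have KL: "K - a * L > 0" using h(1) unfolding K_def L_eq lfn c_def \<gamma>_def by (simp add: algebra_simps)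
  have Kn: "K - a * ln (real n) > 0" using h(2) unfolding K_def lfn c_def \<gamma>_def by (simp add: algebra_simps)

  obtain \<eta>1 where eta1: "\<eta>1 > 0" and Q1: "\<And>y z. 0 < y \<Longrightarrow> y \<le> z \<Longrightarrow> z \<le> (1+\<eta>1)*y \<Longrightarrow> g z \<ge> (1-\<epsilon>) * g y"
    using regQ[OF g_pos reg e(1)] by auto
  define e1 where "e1 = min \<epsilon> \<eta>1"
  have e1: "e1 > 0" "e1 \<le> \<epsilon>" "e1 \<le> \<eta>1" using e eta1 by (auto simp: e1_def)
  obtain X where X: "\<And>x. x > X \<Longrightarrow> \<exists>m. m \<ge> 1 \<and> x \<le> real m \<and> real m \<le> (1+e1)*x \<and>
     f (n*m) \<ge> (1-e1) * f n * f m \<and> \<bar>f m - g (real m)\<bar> < e1 * g (real m) \<and>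
     \<bar>f (n*m) - g (real (n*m))\<bar> < e1 * g (real (n*m))"
    using key[OF wsm normal _ e1(1), of n] n2 by auto
  define Y1 where "Y1 = max X 1"
  have step: "\<exists>z. real n * y \<le> z \<and> z \<le> A * y \<and> g z \<ge> c * f n * g y" if yY: "y > Y1" for y
  proof -
    have ypos: "y > 0" and yX: "y > X" using yY by (auto simp: Y1_def)
    obtain m where m: "m \<ge> 1" "y \<le> real m" "real m \<le> (1+e1)*y"
      "f (n*m) \<ge> (1-e1) * f n * f m" "\<bar>f m - g (real m)\<bar> < e1 * g (real m)"
      "\<bar>f (n*m) - g (real (n*m))\<bar> < e1 * g (real (n*m))" using X[OF yX] by blast
    define z where "z = real (n*m)"
    have mpos: "real m > 0" using m by simp
    have zpos: "z > 0" using m n2 unfolding z_def by simp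
    have gy: "g y > 0" and gm: "g (real m) > 0" and gz: "g z > 0" using g_pos ypos mpos zpos by auto
    have "(1+e1)*y \<le> (1+\<eta>1)*y" using e1 ypos by (intro mult_right_mono) auto
    hence s1: "(1-\<epsilon>)*g y \<le> g (real m)" using Q1[OF ypos m(2)] m(3) by simp
    have s2: "(1-\<epsilon>)*((1-\<epsilon>)*g y) \<le> (1-e1)*g (real m)"
      using s1 e e1 gy by (intro mult_mono) auto
    have s3: "(1-e1)*g (real m) < f m" using m(5) by (simp add: abs_less_iff algebra_simps)
    have s3': "(1-\<epsilon>)^2*g y \<le> f m" using s2 s3 by (simp add: power2_eq_square algebra_simps)
    have s4: "(1-\<epsilon>)*(f n * ((1-\<epsilon>)^2*g y)) \<le> (1-e1)*(f n * f m)"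
      using s3' e e1 gy fn by (intro mult_mono mult_left_mono) auto
    have s5: "f (n*m) < (1+e1) * g z" using m(6) unfolding z_def by (simp add: abs_less_iff algebra_simps)
    have s6: "(1+e1) * g z \<le> (1+\<epsilon>) * g z" using e1 gz by (intro mult_right_mono) auto
    have eq1: "(1-\<epsilon>)^3 * f n * g y = (1-\<epsilon>)*(f n * ((1-\<epsilon>)^2*g y))"
      by (simp add: power3_eq_cube power2_eq_square mult.assoc mult.left_commute)
    have eq2: "(1-e1)*(f n * f m) = (1-e1) * f n * f m" by (simp add: mult.assoc)
    have "(1-\<epsilon>)^3 * f n * g y \<le> (1+\<epsilon>) * g z"
      using s4 m(4) s5 s6 unfolding eq1 eq2 by linarith
    moreover have "c * f n * g y = ((1-\<epsilon>)^3 * f n * g y) / (1+\<epsilon>)" unfolding c_def by simp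
    moreover have "1+\<epsilon> > 0" using e by simp
    ultimately have gz_ge: "c * f n * g y \<le> g z"
      by (simp add: pos_divide_le_eq mult.commute)
    have "real n * y \<le> real n * real m" using m(2) by (intro mult_left_mono) auto
    hence "real n * y \<le> z" unfolding z_def by simp
    moreover have "z \<le> A * y"
    proof -
      have "z = real n * real m" unfolding z_def by simp
      also have "\<dots> \<le> real n * ((1+e1)*y)" using m(3) by (intro mult_left_mono) auto
      also have "\<dots> \<le> real n * ((1+\<epsilon>)*y)" using e1 ypos by (intro mult_left_mono mult_right_mono) auto
      finally show ?thesis unfolding A_def by (simp add: algebra_simps)
    qed
    ultimately show ?thesis using gz_ge by blast
  qed
  have "\<forall>y. \<exists>z. y > Y1 \<longrightarrow> (real n * y \<le> z \<and> z \<le> A * y \<and> g z \<ge> c * f n * g y)"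
    using step by blast
  from choice[OF this] obtain s where s0: "\<forall>y. y > Y1 \<longrightarrow> (real n * y \<le> s y \<and> s y \<le> A * y \<and> g (s y) \<ge> c * f n * g y)"
    by blast
  have s: "\<And>y. y > Y1 \<Longrightarrow> real n * y \<le> s y \<and> s y \<le> A * y \<and> g (s y) \<ge> c * f n * g y"
    using s0 by blast
  define y0 where "y0 = Y1 + 1"
  have y0: "y0 > Y1" "y0 \<ge> 2" unfolding y0_def Y1_def by auto
  define t where "t k = (s ^^ k) y0" for k
  have tS: "t (Suc k) = s (t k)" for k unfolding t_def by simp
  have T: "t k \<ge> y0 \<and> ln (t k) \<ge> ln y0 + real k * ln (real n) \<and> ln (t k) \<le> ln y0 + real k * L
       \<and> ln (g (t k)) \<ge> real k * K + ln (g y0)" for k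
  proof (induction k)
    case 0
    then show ?case unfolding t_def by simp
  next
    case (Suc k)
    have tk: "t k \<ge> y0" using Suc by simp
    hence tkp: "t k > 0" "t k > Y1" using y0 by auto
    note S = s[OF tkp(2), folded tS]
    have "t k \<le> real n * t k" using tkp n2 by simp
    hence t1: "t (Suc k) \<ge> y0" using S tk by linarith
    have t1p: "t (Suc k) > 0" using t1 y0 by linarith
    have ntp: "real n * t k > 0" using tkp n2 by simp
    have "ln (t (Suc k)) \<ge> ln (real n * t k)" using S by (simp add: ln_le_cancel_iff[OF ntp t1p])
    hence l1: "ln (t (Suc k)) \<ge> ln (real n) + ln (t k)" using tkp n2 by (simp add: ln_mult)
    have atp: "A * t k > 0" using tkp Apos by simp
    have "ln (t (Suc k)) \<le> ln (A * t k)" using S by (simp add: ln_le_cancel_iff[OF t1p atp])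
    hence l2: "ln (t (Suc k)) \<le> L + ln (t k)" using tkp Apos unfolding L_def by (simp add: ln_mult)
    have gtk: "g (t k) > 0" using g_pos tkp by auto
    have cfg: "c * f n * g (t k) > 0" using cpos fn gtk by simp
    have gts: "g (t (Suc k)) > 0" using g_pos t1p by auto
    have "ln (g (t (Suc k))) \<ge> ln (c * f n * g (t k))"
      using S by (simp add: ln_le_cancel_iff[OF cfg gts])
    hence l3: "ln (g (t (Suc k))) \<ge> K + ln (g (t k))" using cpos fn gtk unfolding K_eq by (simp add: ln_mult)
    show ?case using Suc l1 l2 l3 t1 by (simp add: algebra_simps)
  qed
  have tA: "t (Suc k) \<le> A * t k" for k
    using s[of "t k"] T[of k] y0 unfolding tS by auto

  obtain \<eta>2 where eta2: "\<eta>2 > 0" and Q2: "\<And>y z. 0 < y \<Longrightarrow> y \<le> z \<Longrightarrow> z \<le> (1+\<eta>2)*y \<Longrightarrow> g z \<ge> (1-1/2) * g y"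
    using regQ[OF g_pos reg, of "1/2"] by auto
  have Q2': "\<And>y z. 0 < y \<Longrightarrow> y \<le> z \<Longrightarrow> z \<le> (1+\<eta>2)*y \<Longrightarrow> g z \<ge> (1/2) * g y"
    using Q2 by simp
  obtain J where J: "A < (1+\<eta>2)^J" using real_arch_pow[of "1+\<eta>2" A] eta2 by auto
  have interp: "ln (g y) \<ge> - (real J * ln 2) + ln (g (t k))" if "t k \<le> y" "y \<le> t (Suc k)" for k y
  proof -
    have tkp: "t k > 0" using T[of k] y0 by auto
    have "y \<le> A * t k" using that tA[of k] by linarith
    also have "\<dots> \<le> (1+\<eta>2)^J * t k" using J tkp by (intro mult_right_mono) auto
    finally have "g y \<ge> (1/2)^J * g (t k)" using chain[where g=g and \<eta>=\<eta>2 and y="t k" and z=y and j=J, OF g_pos eta2 Q2' tkp that(1)] by blast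
    moreover have "g (t k) > 0" using g_pos tkp by auto
    moreover have p1: "g y > 0" using g_pos tkp that(1) by auto
    moreover have p2: "(1/2)^J * g (t k) > 0" using \<open>g (t k) > 0\<close> by simp
    ultimately have "ln (g y) \<ge> ln ((1/2)^J * g (t k))" using ln_le_cancel_iff[OF p2 p1] by blast
    also have "ln ((1/2)^J * g (t k)) = - (real J * ln 2) + ln (g (t k))"
    proof -
      have "ln ((1/2)^J * g (t k)) = ln ((1/2::real)^J) + ln (g (t k))"
        using \<open>g (t k) > 0\<close> by (intro ln_mult_pos) auto
      moreover have "ln ((1/2::real)^J) = real J * ln (1/2)" by (rule ln_realpow)
      moreover have "ln (1/2::real) = - ln 2" by (simp add: ln_div)
      ultimately show ?thesis by simp
    qed
    finally show ?thesis .
  qed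
  have find: "\<exists>k. t k \<le> y \<and> y < t (Suc k)" if "y0 \<le> y" "y < t j" for y j
    using that
  proof (induction j)
    case 0 then show ?case unfolding t_def by simp
  next
    case (Suc j)
    show ?case
    proof (cases "y < t j")
      case True then show ?thesis using Suc by blast
    next
      case False then show ?thesis using Suc by (auto simp: not_less)
    qed
  qed
  have big: "\<exists>j. y < t j" if "y \<ge> y0" for y
  proof -
    have ypos: "y > 0" using that y0 by auto
    obtain j where j: "ln y < real j * ln (real n)" using reals_Archimedean3[OF lnn] by blast
    have "ln y0 \<ge> 0" using y0 by simp
    hence "ln y < ln (t j)" using T[of j] j by linarith
    moreover have "t j > 0" using T[of j] y0 by linarith
    ultimately show ?thesis using ypos by (subst (asm) ln_less_cancel_iff) auto
  qed
  define G where "G = min (K - a * ln (real n)) (K - a * L)"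
  have Gpos: "G > 0" using KL Kn unfolding G_def by simp
  define P where "P = \<bar>ln (g y0)\<bar>"
  define Q where "Q = \<bar>a\<bar> * \<bar>ln y0\<bar>"
  define R where "R = \<bar>a\<bar> * L"
  have a1: "a * ln y0 \<le> Q" unfolding Q_def by (metis abs_ge_self abs_mult)
  have a2: "a * L \<le> R" unfolding R_def using Lpos by (intro mult_right_mono) auto
  have a3: "- P \<le> ln (g y0)" unfolding P_def by linarith
  have a4: "0 \<le> R" unfolding R_def using Lpos by simp
  define M where "M = real J * ln 2 + P + Q + R"
  define k0 where "k0 = nat \<lceil>M/G\<rceil> + 1"
  have "real (nat \<lceil>M/G\<rceil>) \<ge> M/G" by (rule real_nat_ceiling_ge)
  hence "real k0 > M/G" unfolding k0_def by simp
  hence k0G: "real k0 * G > M" using Gpos by (simp add: field_simps)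
  define Yt where "Yt = max y0 (exp (ln y0 + real k0 * L))"
  show ?thesis unfolding eventually_at_top_linorder
  proof (rule exI[of _ Yt], intro allI impI)
    fix y assume yY: "y \<ge> Yt"
    hence yy0: "y \<ge> y0" unfolding Yt_def by simp
    hence ypos: "y > 0" and y1: "y > 1" using y0 by auto
    obtain k where k: "t k \<le> y" "y < t (Suc k)" using find[OF yy0] big[OF yy0] by blast
    have tkp: "t k > 0" using T[of k] y0 by auto
    have "ln (t k) \<le> ln y" using k tkp ypos by (simp add: ln_le_cancel_iff)
    hence lo: "ln y \<ge> ln y0 + real k * ln (real n)" using T[of k] by linarith
    have tsp: "t (Suc k) > 0" using k ypos by linarith
    have "ln y < ln (t (Suc k))" using k by (simp add: ln_less_cancel_iff[OF ypos tsp])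
    hence hi: "ln y < ln y0 + real (Suc k) * L" using T[of "Suc k"] by linarith
    have lg: "ln (g y) \<ge> - (real J * ln 2) + real k * K + ln (g y0)"
      using interp[of k y] k T[of k] by linarith
    have kk0: "k \<ge> k0"
    proof (rule ccontr)
      assume "\<not> k \<ge> k0"
      hence "real (Suc k) * L \<le> real k0 * L" using Lpos by (intro mult_right_mono) auto
      hence "ln y < ln y0 + real k0 * L" using hi by linarith
      moreover have "exp (ln y0 + real k0 * L) \<le> y" using yY unfolding Yt_def by simp
      hence "ln (exp (ln y0 + real k0 * L)) \<le> ln y" using ypos by (subst ln_le_cancel_iff) auto
      hence "ln y0 + real k0 * L \<le> ln y" by simp
      ultimately show False by linarith
    qed
    have "real k0 * G \<le> real k * G" using kk0 Gpos by (intro mult_right_mono) auto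
    hence kG: "real k * G > M" using k0G by linarith
    have "a * ln y < ln (g y)"
    proof (cases "a \<ge> 0")
      case True
      have "a * ln y \<le> a * (ln y0 + real (Suc k) * L)" using True hi by (intro mult_left_mono) auto
      also have "\<dots> = a * ln y0 + a * L + real k * (a * L)" by (simp add: algebra_simps)
      finally have u: "a * ln y \<le> a * ln y0 + a * L + real k * (a * L)" .
      have "real k * G \<le> real k * (K - a * L)" unfolding G_def by (intro mult_left_mono) auto
      hence v: "real k * G \<le> real k * K - real k * (a * L)" by (simp add: algebra_simps)
      show ?thesis using u v kG lg a1 a2 a3 unfolding M_def by linarith
    next
      case False
      have "a * ln y \<le> a * (ln y0 + real k * ln (real n))" using False lo by (intro mult_left_mono_neg) auto
      also have "\<dots> = a * ln y0 + real k * (a * ln (real n))" by (simp add: algebra_simps)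
      finally have u: "a * ln y \<le> a * ln y0 + real k * (a * ln (real n))" .
      have "real k * G \<le> real k * (K - a * ln (real n))" unfolding G_def by (intro mult_left_mono) auto
      hence v: "real k * G \<le> real k * K - real k * (a * ln (real n))" by (simp add: algebra_simps)
      show ?thesis using u v kG lg a1 a3 a4 unfolding M_def by linarith
    qed
    thus "a < ln (g y) / ln y" using y1 by (simp add: field_simps)
  qed
qed


theorem mainTheorem3:
  fixes f :: "nat \<Rightarrow> real" and g :: "real \<Rightarrow> real"
  assumes f_nonneg: "\<And>n. n \<ge> 1 \<Longrightarrow> f n \<ge> 0"
    and g_pos: "\<And>y. y > 0 \<Longrightarrow> g y > 0"
    and wsm: "weakly_super_multiplicative f"
    and normal: "has_normal_order f g"
    and reg: "mono_on {0<..} g \<or> log_uniformly_continuous g"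
  shows "(SUP n\<in>{2..}. log_ratio f n) \<noteq> -\<infinity> \<and>
         ((\<lambda>y. ereal (ln (g y) / ln y)) \<longlongrightarrow> (SUP n\<in>{2..}. log_ratio f n)) at_top"
proof -
  define \<alpha> where "\<alpha> = (SUP n\<in>{2..}. log_ratio f n)"
  have ex: "\<exists>n\<ge>2. f n > 0"
  proof (rule ccontr)
    assume nex: "\<not> ?thesis"
    have z: "f n = 0" if "n \<ge> 2" for n using nex f_nonneg[of n] that by force
    obtain X where X: "\<And>x. x > X \<Longrightarrow> \<exists>m. m \<ge> 1 \<and> x \<le> real m \<and> real m \<le> (1+1/2)*x \<and>
       f (1*m) \<ge> (1-1/2) * f 1 * f m \<and> \<bar>f m - g (real m)\<bar> < 1/2 * g (real m) \<and>
       \<bar>f (1*m) - g (real (1*m))\<bar> < 1/2 * g (real (1*m))"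
      using key[OF wsm normal, of 1 "1/2"] by auto
    obtain m where m: "max X 2 + 1 \<le> real m" "\<bar>f m - g (real m)\<bar> < 1/2 * g (real m)"
    proof -
      have "X < max X 2 + 1" by simp
      from X[OF this] show ?thesis using that by blast
    qed
    have "m \<ge> 2" using m(1) by linarith
    hence "f m = 0" "g (real m) > 0" using z g_pos by auto
    thus False using m(2) by simp
  qed
  then obtain n0 where n0: "n0 \<ge> 2" "f n0 > 0" by blast
  have "log_ratio f n0 \<le> \<alpha>" unfolding \<alpha>_def using n0 by (intro SUP_upper) auto
  moreover have "log_ratio f n0 \<noteq> -\<infinity>" using n0 unfolding log_ratio_def by simp
  ultimately have A1: "\<alpha> \<noteq> -\<infinity>" by auto
  have A2: "((\<lambda>y. ereal (ln (g y) / ln y)) \<longlongrightarrow> \<alpha>) at_top"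
  proof (rule order_tendstoI)
    fix l assume "l < \<alpha>"
    then obtain n where n: "n \<ge> 2" "l < log_ratio f n" unfolding \<alpha>_def less_SUP_iff by auto
    have "f n \<noteq> 0" using n(2) unfolding log_ratio_def by auto
    hence fn: "f n > 0" using f_nonneg[of n] n(1) by auto
    have "l < ereal (ln (f n) / ln (real n))" using n(2) fn unfolding log_ratio_def by simp
    then obtain z where z: "l < ereal z" "z < ln (f n) / ln (real n)" using ereal_dense2 by fastforce
    have "eventually (\<lambda>y. z < ln (g y) / ln y) at_top"
      using lower[OF g_pos wsm normal reg n(1) fn z(2)] .
    thus "eventually (\<lambda>y. l < ereal (ln (g y) / ln y)) at_top"
      by eventually_elim (use z(1) in \<open>auto intro: less_trans\<close>)
  next
    fix u assume au: "\<alpha> < u"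
    show "eventually (\<lambda>y. ereal (ln (g y) / ln y) < u) at_top"
    proof (cases u)
      case PInf thus ?thesis by simp
    next
      case MInf thus ?thesis using au by simp
    next
      case (real c)
      obtain b where b: "\<alpha> < ereal b" "ereal b < u" using ereal_dense2[OF au] by blast
      have bc: "b < c" using b(2) real by simp
      have fb: "f n \<le> real n powr b" if "n \<ge> 2" for n
      proof (cases "f n = 0")
        case True thus ?thesis by simp
      next
        case False
        hence fn: "f n > 0" using f_nonneg[of n] that by auto
        have "log_ratio f n \<le> \<alpha>" unfolding \<alpha>_def using that by (intro SUP_upper) auto
        moreover have "log_ratio f n = ereal (ln (f n) / ln (real n))" using False unfolding log_ratio_def by simp
        ultimately have "ereal (ln (f n) / ln (real n)) < ereal b" using b(1) by (metis order_le_less_trans)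
        hence "ln (f n) / ln (real n) < b" by simp
        moreover have "ln (real n) > 0" using that by simp
        ultimately have "ln (f n) < b * ln (real n)" by (simp add: divide_less_eq)
        hence "exp (ln (f n)) < exp (b * ln (real n))" by simp
        thus ?thesis using fn that by (simp add: powr_def)
      qed
      have "eventually (\<lambda>y. ln (g y) / ln y < c) at_top"
        using upper[OF g_pos wsm normal reg fb bc] by blast
      thus ?thesis using real by simp
    qed
  qed
  show ?thesis using A1 A2 unfolding \<alpha>_def by simp
qed

end
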